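(* Let $G$ be a $2$-connected $\{P_k, K_m\}$-free graph of order $n\geq k$. If $G$ contains a strong dominating path $P$ such that $d(u)\geq \delta_k$ for every vertex $u\in V(G)\setminus V(P)$, then $G$ is a subgraph of $H \vee I_{n-\delta_k}$ if $k$ is even, and of $H \vee ( I_{n-\delta_k-2} \cup K_2)$ if $k$ is odd, for some $K_{m-1}$-free graph $H$ on $\delta_k$ vertices.
   Context: All graphs are finite and simple. $K_n$, $P_n$, $I_n$ denote the complete graph, the path, and the edgeless graph on $n$ vertices. For disjoint graphs $G,H$: $G\cup H$ is their disjoint union and $G\vee H$ is obtained from $G\cup H$ by adding all edges between $V(G)$ and $V(H)$. A graph is $\mathcal H$-free if it contains no member of $\mathcal H$ as a subgraph. $\delta_k=\lfloor k/2\rfloor-1$. A path $P$ in $G$ is a strong dominating path if $N(v)\subseteq V(P)$ for every $v\in V(G)\setminus V(P)$, where $N(v)$ is the neighbourhood of $v$ in $G$. *)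

theory Defs
  imports Main
begin

type_synonym 'v graph = "'v set \<times> ('v \<Rightarrow> 'v \<Rightarrow> bool)"

definition verts :: "'v graph \<Rightarrow> 'v set" where "verts G = fst G"
definition adj :: "'v graph \<Rightarrow> 'v \<Rightarrow> 'v \<Rightarrow> bool" where "adj G = snd G"

definition simple_graph :: "'v graph \<Rightarrow> bool" where
  "simple_graph G \<longleftrightarrow> finite (verts G) \<and>
     (\<forall>u v. adj G u v \<longrightarrow> u \<in> verts G \<and> v \<in> verts G) \<and>
     (\<forall>u v. adj G u v \<longrightarrow> adj G v u) \<and> (\<forall>u. \<not> adj G u u)"

definition neighbours :: "'v graph \<Rightarrow> 'v \<Rightarrow> 'v set" where
  "neighbours G v = {u \<in> verts G. adj G v u}"

definition degree :: "'v graph \<Rightarrow> 'v \<Rightarrow> nat" where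
  "degree G v = card (neighbours G v)"

definition subgraph_of :: "'v graph \<Rightarrow> 'w graph \<Rightarrow> bool" where
  "subgraph_of G G' \<longleftrightarrow> (\<exists>f. inj_on f (verts G) \<and> f ` verts G \<subseteq> verts G' \<and>
     (\<forall>u\<in>verts G. \<forall>v\<in>verts G. adj G u v \<longrightarrow> adj G' (f u) (f v)))"

definition complete_graph :: "nat \<Rightarrow> nat graph" where
  "complete_graph n = ({0..<n}, \<lambda>i j. i < n \<and> j < n \<and> i \<noteq> j)"
definition path_graph :: "nat \<Rightarrow> nat graph" where
  "path_graph n = ({0..<n}, \<lambda>i j. i < n \<and> j < n \<and> (j = i + 1 \<or> i = j + 1))"
definition edgeless_graph :: "nat \<Rightarrow> nat graph" where
  "edgeless_graph n = ({0..<n}, \<lambda>i j. False)"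

definition disj_union :: "'v graph \<Rightarrow> 'w graph \<Rightarrow> ('v + 'w) graph" where
  "disj_union G H = (verts G <+> verts H,
     \<lambda>x y. case (x, y) of (Inl a, Inl b) \<Rightarrow> adj G a b
                       | (Inr a, Inr b) \<Rightarrow> adj H a b
                       | _ \<Rightarrow> False)"
definition graph_join :: "'v graph \<Rightarrow> 'w graph \<Rightarrow> ('v + 'w) graph" where
  "graph_join G H = (verts G <+> verts H,
     \<lambda>x y. case (x, y) of (Inl a, Inl b) \<Rightarrow> adj G a b
                       | (Inr a, Inr b) \<Rightarrow> adj H a b
                       | (Inl a, Inr b) \<Rightarrow> a \<in> verts G \<and> b \<in> verts H
                       | (Inr a, Inl b) \<Rightarrow> a \<in> verts H \<and> b \<in> verts G)"

definition free_of :: "'w graph \<Rightarrow> 'v graph \<Rightarrow> bool" where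
  "free_of F G \<longleftrightarrow> \<not> subgraph_of F G"

definition connected :: "'v graph \<Rightarrow> bool" where
  "connected G \<longleftrightarrow> verts G \<noteq> {} \<and>
     (\<forall>u\<in>verts G. \<forall>v\<in>verts G.
        (\<lambda>x y. adj G x y \<and> x \<in> verts G \<and> y \<in> verts G)\<^sup>*\<^sup>* u v)"

definition delete_vertex :: "'v graph \<Rightarrow> 'v \<Rightarrow> 'v graph" where
  "delete_vertex G v = (verts G - {v}, \<lambda>x y. adj G x y \<and> x \<noteq> v \<and> y \<noteq> v)"

definition two_connected :: "'v graph \<Rightarrow> bool" where
  "two_connected G \<longleftrightarrow> card (verts G) \<ge> 3 \<and> connected G \<and>
     (\<forall>v\<in>verts G. connected (delete_vertex G v))"

definition is_path :: "'v graph \<Rightarrow> 'v list \<Rightarrow> bool" where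
  "is_path G ps \<longleftrightarrow> ps \<noteq> [] \<and> distinct ps \<and> set ps \<subseteq> verts G \<and>
     (\<forall>i. Suc i < length ps \<longrightarrow> adj G (ps ! i) (ps ! Suc i))"

definition strong_dominating_path :: "'v graph \<Rightarrow> 'v list \<Rightarrow> bool" where
  "strong_dominating_path G ps \<longleftrightarrow> is_path G ps \<and>
     (\<forall>v \<in> verts G - set ps. neighbours G v \<subseteq> set ps)"

definition delta :: "nat \<Rightarrow> nat" where
  "delta k = k div 2 - 1"

end

theory Submission
  imports Defs
begin

lemma sg_sym: "simple_graph G \<Longrightarrow> adj G u v \<Longrightarrow> adj G v u"
  by (simp add: simple_graph_def)
lemma sg_in: "simple_graph G \<Longrightarrow> adj G u v \<Longrightarrow> u \<in> verts G \<and> v \<in> verts G"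
  by (simp add: simple_graph_def)
lemma sg_irr: "simple_graph G \<Longrightarrow> \<not> adj G u u"
  by (simp add: simple_graph_def)

lemma is_path_iff: "is_path G ps \<longleftrightarrow> ps \<noteq> [] \<and> distinct ps \<and> set ps \<subseteq> verts G \<and> successively (adj G) ps"
  by (simp add: is_path_def successively_conv_nth)

lemma path_graph_sub:
  assumes "is_path G Q" "k \<le> length Q" "simple_graph G"
  shows "subgraph_of (path_graph k) G"
  unfolding subgraph_of_def
proof (intro exI[of _ "nth Q"] conjI ballI impI)
  show "inj_on ((!) Q) (verts (path_graph k))"
    using assms by (auto simp: inj_on_def verts_def path_graph_def is_path_def nth_eq_iff_index_eq)
  show "(!) Q ` verts (path_graph k) \<subseteq> verts G"
    using assms by (auto simp: verts_def path_graph_def is_path_def)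
  fix i j assume "i \<in> verts (path_graph k)" "j \<in> verts (path_graph k)" "adj (path_graph k) i j"
  then have "i < k" "j < k" "j = i + 1 \<or> i = j + 1" by (auto simp: verts_def adj_def path_graph_def)
  then show "adj G (Q ! i) (Q ! j)"
    using assms sg_sym[OF assms(3)] unfolding is_path_def by auto
qed

lemma complete0: "subgraph_of (complete_graph 0) G"
  unfolding subgraph_of_def by (auto simp: verts_def complete_graph_def)

definition gmap :: "'a list \<Rightarrow> 'a \<Rightarrow> 'a \<Rightarrow> nat \<Rightarrow> 'a" where
  "gmap P u u' i = (if i = 0 then u else if i \<le> length P then P ! (i - 1) else u')"

lemma idx_path:
  assumes P: "is_path G P" and u: "u \<in> verts G" "u \<notin> set P"
    and u': "Suc (length P) \<in> set idx \<Longrightarrow> u' \<in> verts G \<and> u' \<notin> set P \<and> u' \<noteq> u"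
    and ne: "idx \<noteq> []" and d: "distinct idx" and s: "set idx \<subseteq> {0..Suc (length P)}"
    and sc: "successively (\<lambda>i j. adj G (gmap P u u' i) (gmap P u u' j)) idx"
  shows "is_path G (map (gmap P u u') idx)"
proof -
  have inj: "inj_on (gmap P u u') (set idx)"
  proof (rule inj_onI)
    fix x y assume xy: "x \<in> set idx" "y \<in> set idx" "gmap P u u' x = gmap P u u' y"
    have dP: "distinct P" using P by (simp add: is_path_def)
    have mem: "\<And>i. 1 \<le> i \<Longrightarrow> i \<le> length P \<Longrightarrow> P ! (i - 1) \<in> set P" by auto
    have g: "\<And>i. i \<in> set idx \<Longrightarrow> (1 \<le> i \<and> i \<le> length P \<and> gmap P u u' i = P ! (i - 1) \<and> P ! (i - 1) \<in> set P) \<or> (i = 0 \<and> gmap P u u' i = u) \<or> (i = Suc (length P) \<and> gmap P u u' i = u')"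
    proof -
      fix i assume "i \<in> set idx"
      then have "i \<le> Suc (length P)" using s by auto
      then show "?thesis i" by (cases "i = 0"; cases "i = Suc (length P)"; auto simp: gmap_def)
    qed
    show "x = y"
    proof (cases "1 \<le> x \<and> x \<le> length P")
      case True
      then have gx: "gmap P u u' x = P ! (x - 1)" by (simp add: gmap_def)
      show ?thesis
      proof (cases "1 \<le> y \<and> y \<le> length P")
        case True
        then have "gmap P u u' y = P ! (y - 1)" by (simp add: gmap_def)
        then have "P ! (x - 1) = P ! (y - 1)" using gx xy by simp
        then have "x - 1 = y - 1" using dP True \<open>1 \<le> x \<and> x \<le> length P\<close> nth_eq_iff_index_eq[of P "x - 1" "y - 1"] by auto
        then show ?thesis using True \<open>1 \<le> x \<and> x \<le> length P\<close> by linarith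
      next
        case False
        then show ?thesis using g[OF xy(2)] gx xy u u' mem[of x] \<open>1 \<le> x \<and> x \<le> length P\<close> by metis
      qed
    next
      case False
      then show ?thesis using g[OF xy(1)] g[OF xy(2)] xy u u' by metis
    qed
  qed
  have "set (map (gmap P u u') idx) \<subseteq> verts G"
  proof
    fix v assume "v \<in> set (map (gmap P u u') idx)"
    then obtain i where i: "i \<in> set idx" "v = gmap P u u' i" by auto
    have "i \<le> Suc (length P)" using i s by auto
    then show "v \<in> verts G" using i u u' P
      by (cases "i = Suc (length P)") (auto simp: gmap_def is_path_def)
  qed
  then show ?thesis using ne d inj sc by (simp add: is_path_iff distinct_map successively_map)
qed

lemma idx_cover:
  assumes "{1..length P} \<subseteq> set idx"
  shows "set P \<subseteq> set (map (gmap P u u') idx)"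
proof
  fix v assume "v \<in> set P"
  then obtain i where "i < length P" "v = P ! i" by (auto simp: in_set_conv_nth)
  then have "Suc i \<in> set idx" "gmap P u u' (Suc i) = v" using assms by (auto simp: gmap_def)
  then show "v \<in> set (map (gmap P u u') idx)" by force
qed


declare upt_Suc[simp del]

lemma succ_upt: "(\<And>i. a \<le> i \<Longrightarrow> Suc i < b \<Longrightarrow> R i (Suc i)) \<Longrightarrow> successively R [a..<b]"
  by (auto simp: successively_conv_nth)

lemma succ_rev_upt: "(\<And>i. a \<le> i \<Longrightarrow> Suc i < b \<Longrightarrow> R (Suc i) i) \<Longrightarrow> successively R (rev [a..<b])"
  unfolding successively_rev by (rule succ_upt)

lemma succ_app: "successively R xs \<Longrightarrow> successively R ys \<Longrightarrow> (xs \<noteq> [] \<Longrightarrow> ys \<noteq> [] \<Longrightarrow> R (last xs) (hd ys)) \<Longrightarrow> successively R (xs @ ys)"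
  by (auto simp: successively_append_iff)

lemma succ_single: "successively R [x]" by simp

lemma hd_upt': "a < b \<Longrightarrow> hd [a..<b] = a" by (simp add: hd_upt)
lemma last_upt': "a < b \<Longrightarrow> last [a..<b] = b - 1" by (simp add: last_upt)
lemma hd_rev_upt: "a < b \<Longrightarrow> hd (rev [a..<b]) = b - 1" by (simp add: hd_rev last_upt)
lemma last_rev_upt: "a < b \<Longrightarrow> last (rev [a..<b]) = a" by (simp add: last_rev hd_upt)
lemma upt_neD: "[a..<b] \<noteq> [] \<Longrightarrow> a < b" by (cases "a < b") auto
lemma hd_app_ne: "xs \<noteq> [] \<Longrightarrow> hd (xs @ ys) = hd xs" by simp

locale mp =
  fixes G :: "'a graph" and P :: "'a list"
  assumes sg: "simple_graph G" and pth: "is_path G P"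
    and maxP: "\<And>Q. is_path G Q \<Longrightarrow> set P \<subseteq> set Q \<Longrightarrow> length Q \<le> length P"
begin

definition Au :: "'a \<Rightarrow> nat set" where
  "Au u = {i. 1 \<le> i \<and> i \<le> length P \<and> adj G u (P ! (i - 1))}"

abbreviation R :: "'a \<Rightarrow> 'a \<Rightarrow> nat \<Rightarrow> nat \<Rightarrow> bool" where
  "R u u' i j \<equiv> adj G (gmap P u u' i) (gmap P u u' j)"

lemma Rpath:
  assumes "1 \<le> i" "i < length P" shows "R u u' i (Suc i) \<and> R u u' (Suc i) i"
proof -
  have "Suc (i - 1) < length P" using assms by simp
  then have "adj G (P ! (i - 1)) (P ! (Suc (i - 1)))" using pth unfolding is_path_def by blast
  moreover have "Suc (i - 1) = i" using assms by simp
  ultimately have "adj G (P ! (i - 1)) (P ! i)" by simp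
  then show ?thesis using assms sg_sym[OF sg] by (auto simp: gmap_def)
qed

lemma R0: "1 \<le> i \<Longrightarrow> i \<le> length P \<Longrightarrow> (R u u' 0 i \<longleftrightarrow> i \<in> Au u) \<and> (R u u' i 0 \<longleftrightarrow> i \<in> Au u)"
  using sg_sym[OF sg] by (auto simp: gmap_def Au_def)

lemma Rp1: "1 \<le> i \<Longrightarrow> i \<le> length P \<Longrightarrow> (R u u' (Suc (length P)) i \<longleftrightarrow> i \<in> Au u') \<and> (R u u' i (Suc (length P)) \<longleftrightarrow> i \<in> Au u')"
  using sg_sym[OF sg] by (auto simp: gmap_def Au_def)

lemma RP: "1 \<le> a \<Longrightarrow> a \<le> length P \<Longrightarrow> 1 \<le> b \<Longrightarrow> b \<le> length P \<Longrightarrow> R u u' a b \<longleftrightarrow> adj G (P ! (a - 1)) (P ! (b - 1))"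
  by (auto simp: gmap_def)

lemma noext:
  assumes u: "u \<in> verts G" "u \<notin> set P"
    and u': "Suc (length P) \<in> set idx \<Longrightarrow> u' \<in> verts G \<and> u' \<notin> set P \<and> u' \<noteq> u"
    and d: "distinct idx" and s: "set idx \<subseteq> {0..Suc (length P)}"
    and c: "{1..length P} \<subseteq> set idx" and l: "length P < length idx"
    and sc: "successively (R u u') idx"
  shows False
proof -
  have "idx \<noteq> []" using l by auto
  then have "is_path G (map (gmap P u u') idx)" using idx_path[OF pth u u' _ d s sc] by blast
  from maxP[OF this idx_cover[OF c]] l show False by simp
qed

lemma longpath:
  assumes u: "u \<in> verts G" "u \<notin> set P"
    and u': "Suc (length P) \<in> set idx \<Longrightarrow> u' \<in> verts G \<and> u' \<notin> set P \<and> u' \<noteq> u"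
    and d: "distinct idx" and s: "set idx \<subseteq> {0..Suc (length P)}"
    and l: "k \<le> length idx" "idx \<noteq> []" and f: "free_of (path_graph k) G"
    and sc: "successively (R u u') idx"
  shows False
proof -
  have "is_path G (map (gmap P u u') idx)" using idx_path[OF pth u u' l(2) d s sc] by blast
  from path_graph_sub[OF this _ sg, of k] l f show False by (simp add: free_of_def)
qed

lemma patY:
  assumes u: "u \<in> verts G" "u \<notin> set P"
    and ab: "1 \<le> a" "a < b" "b \<le> length P" and e: "adj G (P ! (a - 1)) (P ! (b - 1))"
    and ua: "Suc a \<in> Au u" and ub: "b = length P \<or> Suc b \<in> Au u"
  shows False
proof -
  let ?idx = "[1..<Suc a] @ rev [Suc a..<Suc b] @ [0] @ [Suc b..<Suc (length P)]"
  have sc: "successively (R u u) ?idx"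
  proof (intro succ_app succ_upt succ_rev_upt succ_single)
      fix i assume "1 \<le> i" "Suc i < Suc a" then show "R u u i (Suc i)" using Rpath ab by auto
    next
      fix i assume "Suc a \<le> i" "Suc i < Suc b" then show "R u u (Suc i) i" using Rpath ab by auto
    next
      fix i assume "Suc b \<le> i" "Suc i < Suc (length P)" then show "R u u i (Suc i)" using Rpath ab by auto
    next
      assume "[0] \<noteq> []" "[Suc b..<Suc (length P)] \<noteq> []"
      then have "Suc b < Suc (length P)" by (intro upt_neD)
      then show "R u u (last [0]) (hd [Suc b..<Suc (length P)])" using ub R0[of "Suc b" u u] ab by (subst hd_upt') auto
    next
      show "R u u (last (rev [Suc a..<Suc b])) (hd ([0] @ [Suc b..<Suc (length P)]))"
        using ab ua R0[of "Suc a" u u] by (simp add: last_rev_upt)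
    next
      show "R u u (last [1..<Suc a]) (hd (rev [Suc a..<Suc b] @ [0] @ [Suc b..<Suc (length P)]))"
        using ab e RP[of a b u u] by (simp add: last_upt' hd_rev_upt)
  qed
  have d: "distinct ?idx" using ab by (auto simp: set_upt)
  have st: "set ?idx = {0..length P}" using ab by (auto simp: set_upt)
  have l: "length P < length ?idx" using ab by simp
  have c: "{1..length P} \<subseteq> set ?idx" using st by auto
  have s: "set ?idx \<subseteq> {0..Suc (length P)}" using st by auto
  have nu: "Suc (length P) \<in> set ?idx \<Longrightarrow> u \<in> verts G \<and> u \<notin> set P \<and> u \<noteq> u" using ab by (simp add: st)
  show False using noext[OF u nu d s c l sc] .
qed

end

context mp
begin

lemma RPs: "1 \<le> a \<Longrightarrow> a \<le> length P \<Longrightarrow> 1 \<le> b \<Longrightarrow> b \<le> length P \<Longrightarrow> adj G (P ! (a - 1)) (P ! (b - 1)) \<Longrightarrow> R u u' a b \<and> R u u' b a"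
  using sg_sym[OF sg] by (auto simp: gmap_def)

lemma patX:
  assumes u: "u \<in> verts G" "u \<notin> set P"
    and ab: "1 \<le> a" "a < b" "b \<le> length P" and e: "adj G (P ! (a - 1)) (P ! (b - 1))"
    and ub: "b - 1 \<in> Au u" and ua: "a = 1 \<or> a - 1 \<in> Au u"
  shows False
proof -
  let ?idx = "rev [b..<Suc (length P)] @ [a..<b] @ [0] @ rev [1..<a]"
  have sc: "successively (R u u) ?idx"
  proof (intro succ_app succ_upt succ_rev_upt succ_single)
      fix i assume "b \<le> i" "Suc i < Suc (length P)" then show "R u u (Suc i) i" using Rpath ab by auto
    next
      fix i assume "a \<le> i" "Suc i < b" then show "R u u i (Suc i)" using Rpath ab by auto
    next
      fix i assume "1 \<le> i" "Suc i < a" then show "R u u (Suc i) i" using Rpath ab by auto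
    next
      assume "[0] \<noteq> []" "rev [1..<a] \<noteq> []"
      then have "1 < a" by (intro upt_neD) simp
      then show "R u u (last [0]) (hd (rev [1..<a]))" using ua R0[of "a - 1" u u] ab by (subst hd_rev_upt) auto
    next
      show "R u u (last [a..<b]) (hd ([0] @ rev [1..<a]))"
        using ab ub R0[of "b - 1" u u] by (simp add: last_upt')
    next
      show "R u u (last (rev [b..<Suc (length P)])) (hd ([a..<b] @ [0] @ rev [1..<a]))"
        using ab e RPs[of a b u u] by (simp add: last_rev_upt hd_upt')
  qed
  have d: "distinct ?idx" using ab by (auto simp: set_upt)
  have st: "set ?idx = {0..length P}" using ab by (auto simp: set_upt)
  have l: "length P < length ?idx" using ab by simp
  have c: "{1..length P} \<subseteq> set ?idx" using st by auto
  have s: "set ?idx \<subseteq> {0..Suc (length P)}" using st by auto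
  have nu: "Suc (length P) \<in> set ?idx \<Longrightarrow> u \<in> verts G \<and> u \<notin> set P \<and> u \<noteq> u" using ab by (simp add: st)
  show False using noext[OF u nu d s c l sc] .
qed

lemma Au_sub: "Au u \<subseteq> {1..length P}" by (auto simp: Au_def)

lemma ins_first:
  assumes u: "u \<in> verts G" "u \<notin> set P" and a: "1 \<in> Au u"
  shows False
proof -
  let ?idx = "[0] @ [1..<Suc (length P)]"
  have p: "1 \<le> length P" using a by (auto simp: Au_def)
  have sc: "successively (R u u) ?idx"
  proof (intro succ_app succ_upt succ_single)
      fix i assume "1 \<le> i" "Suc i < Suc (length P)" then show "R u u i (Suc i)" using Rpath by auto
    next
      show "R u u (last [0]) (hd [1..<Suc (length P)])" using p a R0[of 1 u u] by (subst hd_upt') auto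
  qed
  have d: "distinct ?idx" by (auto simp: set_upt)
  have st: "set ?idx = {0..length P}" by (auto simp: set_upt)
  have l: "length P < length ?idx" by simp
  have c: "{1..length P} \<subseteq> set ?idx" using st by auto
  have s: "set ?idx \<subseteq> {0..Suc (length P)}" using st by auto
  have nu: "Suc (length P) \<in> set ?idx \<Longrightarrow> u \<in> verts G \<and> u \<notin> set P \<and> u \<noteq> u" by (simp add: st)
  show False using noext[OF u nu d s c l sc] .
qed

lemma ins_last:
  assumes u: "u \<in> verts G" "u \<notin> set P" and a: "length P \<in> Au u"
  shows False
proof -
  let ?idx = "[1..<Suc (length P)] @ [0]"
  have p: "1 \<le> length P" using a by (auto simp: Au_def)
  have sc: "successively (R u u) ?idx"
  proof (intro succ_app succ_upt succ_single)
      fix i assume "1 \<le> i" "Suc i < Suc (length P)" then show "R u u i (Suc i)" using Rpath by auto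
    next
      show "R u u (last [1..<Suc (length P)]) (hd [0])" using p a R0[of "length P" u u] by (subst last_upt') auto
  qed
  have d: "distinct ?idx" by (auto simp: set_upt)
  have st: "set ?idx = {0..length P}" by (auto simp: set_upt)
  have l: "length P < length ?idx" by simp
  have c: "{1..length P} \<subseteq> set ?idx" using st by auto
  have s: "set ?idx \<subseteq> {0..Suc (length P)}" using st by auto
  have nu: "Suc (length P) \<in> set ?idx \<Longrightarrow> u \<in> verts G \<and> u \<notin> set P \<and> u \<noteq> u" by (simp add: st)
  show False using noext[OF u nu d s c l sc] .
qed

lemma ins_mid:
  assumes u: "u \<in> verts G" "u \<notin> set P" and a: "i \<in> Au u" "Suc i \<in> Au u"
  shows False
proof -
  let ?idx = "[1..<Suc i] @ [0] @ [Suc i..<Suc (length P)]"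
  have p: "1 \<le> i" "Suc i \<le> length P" using a by (auto simp: Au_def)
  have sc: "successively (R u u) ?idx"
  proof (intro succ_app succ_upt succ_single)
      fix j assume "1 \<le> j" "Suc j < Suc i" then show "R u u j (Suc j)" using Rpath p by auto
    next
      fix j assume "Suc i \<le> j" "Suc j < Suc (length P)" then show "R u u j (Suc j)" using Rpath p by auto
    next
      show "R u u (last [0]) (hd [Suc i..<Suc (length P)])" using p a R0[of "Suc i" u u] by (subst hd_upt') auto
    next
      show "R u u (last [1..<Suc i]) (hd ([0] @ [Suc i..<Suc (length P)]))" using p a R0[of i u u] by (subst last_upt') auto
  qed
  have d: "distinct ?idx" by (auto simp: set_upt)
  have st: "set ?idx = {0..length P}" using p by (auto simp: set_upt)
  have l: "length P < length ?idx" using p by simp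
  have c: "{1..length P} \<subseteq> set ?idx" using st by auto
  have s: "set ?idx \<subseteq> {0..Suc (length P)}" using st by auto
  have nu: "Suc (length P) \<in> set ?idx \<Longrightarrow> u \<in> verts G \<and> u \<notin> set P \<and> u \<noteq> u" using p by (simp add: st)
  show False using noext[OF u nu d s c l sc] .
qed

end

context mp
begin

lemma patZ:
  assumes u: "u \<in> verts G" "u \<notin> set P" and u': "u' \<in> verts G" "u' \<notin> set P" "u' \<noteq> u"
    and cc: "c1 < c2" "c2 < length P"
    and a: "c1 \<in> Au u'" "c2 \<in> Au u'" "Suc c1 \<in> Au u" "Suc c2 \<in> Au u"
  shows False
proof -
  let ?idx = "[1..<Suc c1] @ [Suc (length P)] @ rev [Suc c1..<Suc c2] @ [0] @ [Suc c2..<Suc (length P)]"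
  have c1: "1 \<le> c1" using a by (auto simp: Au_def)
  have sc: "successively (R u u') ?idx"
  proof (intro succ_app succ_upt succ_rev_upt succ_single)
      fix i assume "1 \<le> i" "Suc i < Suc c1" then show "R u u' i (Suc i)" using Rpath cc by auto
    next
      fix i assume "Suc c1 \<le> i" "Suc i < Suc c2" then show "R u u' (Suc i) i" using Rpath cc by auto
    next
      fix i assume "Suc c2 \<le> i" "Suc i < Suc (length P)" then show "R u u' i (Suc i)" using Rpath cc by auto
    next
      show "R u u' (last [0]) (hd [Suc c2..<Suc (length P)])" using cc a R0[of "Suc c2" u u'] by (subst hd_upt') auto
    next
      show "R u u' (last (rev [Suc c1..<Suc c2])) (hd ([0] @ [Suc c2..<Suc (length P)]))"
        using cc a R0[of "Suc c1" u u'] by (subst last_rev_upt) auto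
    next
      show "R u u' (last [Suc (length P)]) (hd (rev [Suc c1..<Suc c2] @ [0] @ [Suc c2..<Suc (length P)]))"
        using cc a Rp1[of c2 u u'] c1 by (subst hd_app_ne) (auto simp: hd_rev_upt)
    next
      show "R u u' (last [1..<Suc c1]) (hd ([Suc (length P)] @ rev [Suc c1..<Suc c2] @ [0] @ [Suc c2..<Suc (length P)]))"
        using cc a Rp1[of c1 u u'] c1 by (subst last_upt') auto
  qed
  have d: "distinct ?idx" using cc by (auto simp: set_upt)
  have st: "set ?idx = {0..Suc (length P)}" using cc c1 by (auto simp: set_upt)
  have l: "length P < length ?idx" using cc by simp
  have c: "{1..length P} \<subseteq> set ?idx" using st by auto
  have s: "set ?idx \<subseteq> {0..Suc (length P)}" using st by auto
  have nu: "Suc (length P) \<in> set ?idx \<Longrightarrow> u' \<in> verts G \<and> u' \<notin> set P \<and> u' \<noteq> u" using u' by simp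
  show False using noext[OF u nu d s c l sc] .
qed

lemma patB1b:
  assumes u: "u \<in> verts G" "u \<notin> set P" and u': "u' \<in> verts G" "u' \<notin> set P" "u' \<noteq> u"
    and cc: "1 \<le> c" "c + 4 \<le> length P"
    and a: "c \<in> Au u'" "c + 3 \<in> Au u'" "Suc c \<in> Au u" "length P < c + 5 \<or> c + 5 \<in> Au u"
    and k: "k \<le> Suc (length P)" and f: "free_of (path_graph k) G"
  shows False
proof -
  let ?idx = "[1..<Suc c] @ [Suc (length P)] @ rev [Suc c..<c + 4] @ [0] @ [c + 5..<Suc (length P)]"
  have sc: "successively (R u u') ?idx"
  proof (intro succ_app succ_upt succ_rev_upt succ_single)
      fix i assume "1 \<le> i" "Suc i < Suc c" then show "R u u' i (Suc i)" using Rpath cc by auto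
    next
      fix i assume "Suc c \<le> i" "Suc i < c + 4" then show "R u u' (Suc i) i" using Rpath cc by auto
    next
      fix i assume "c + 5 \<le> i" "Suc i < Suc (length P)" then show "R u u' i (Suc i)" using Rpath cc by auto
    next
      assume "[0] \<noteq> []" "[c + 5..<Suc (length P)] \<noteq> []"
      then have "c + 5 < Suc (length P)" by (intro upt_neD)
      then show "R u u' (last [0]) (hd [c + 5..<Suc (length P)])" using cc a R0[of "c + 5" u u'] by (subst hd_upt') auto
    next
      show "R u u' (last (rev [Suc c..<c + 4])) (hd ([0] @ [c + 5..<Suc (length P)]))"
        using cc a R0[of "Suc c" u u'] by (subst last_rev_upt) auto
    next
      show "R u u' (last [Suc (length P)]) (hd (rev [Suc c..<c + 4] @ [0] @ [c + 5..<Suc (length P)]))"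
        using cc a Rp1[of "c + 3" u u'] by (subst hd_app_ne) (auto simp: hd_rev_upt add.commute)
    next
      show "R u u' (last [1..<Suc c]) (hd ([Suc (length P)] @ rev [Suc c..<c + 4] @ [0] @ [c + 5..<Suc (length P)]))"
        using cc a Rp1[of c u u'] by (subst last_upt') auto
  qed
  have d: "distinct ?idx" using cc by (auto simp: set_upt)
  have l: "k \<le> length ?idx" using cc k by simp
  have s: "set ?idx \<subseteq> {0..Suc (length P)}" using cc by (auto simp: set_upt)
  have nu: "Suc (length P) \<in> set ?idx \<Longrightarrow> u' \<in> verts G \<and> u' \<notin> set P \<and> u' \<noteq> u" using u' by simp
  show False using longpath[OF u nu d s l _ f sc] by simp
qed

lemma patB1c:
  assumes u: "u \<in> verts G" "u \<notin> set P" and u': "u' \<in> verts G" "u' \<notin> set P" "u' \<noteq> u"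
    and p: "length P = q + 6"
    and a: "q + 5 \<in> Au u" "q + 2 \<in> Au u" "q + 4 \<in> Au u'" "q = 0 \<or> q \<in> Au u'"
    and k: "k \<le> Suc (length P)" and f: "free_of (path_graph k) G"
  shows False
proof -
  let ?idx = "rev [q + 5..<q + 7] @ [0] @ [q + 2..<q + 5] @ [Suc (length P)] @ rev [1..<Suc q]"
  have sc: "successively (R u u') ?idx"
  proof (intro succ_app succ_upt succ_rev_upt succ_single)
      fix i assume "q + 5 \<le> i" "Suc i < q + 7" then show "R u u' (Suc i) i" using Rpath p by auto
    next
      fix i assume "q + 2 \<le> i" "Suc i < q + 5" then show "R u u' i (Suc i)" using Rpath p by auto
    next
      fix i assume "1 \<le> i" "Suc i < Suc q" then show "R u u' (Suc i) i" using Rpath p by auto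
    next
      assume "[Suc (length P)] \<noteq> []" "rev [1..<Suc q] \<noteq> []"
      then have "1 < Suc q" by (intro upt_neD) simp
      then show "R u u' (last [Suc (length P)]) (hd (rev [1..<Suc q]))" using p a Rp1[of q u u'] by (subst hd_rev_upt) auto
    next
      show "R u u' (last [q + 2..<q + 5]) (hd ([Suc (length P)] @ rev [1..<Suc q]))"
        using p a Rp1[of "q + 4" u u'] by (subst last_upt') (auto simp: add.commute)
    next
      show "R u u' (last [0]) (hd ([q + 2..<q + 5] @ [Suc (length P)] @ rev [1..<Suc q]))"
        using p a R0[of "q + 2" u u'] by (subst hd_app_ne) (auto simp: hd_upt')
    next
      show "R u u' (last (rev [q + 5..<q + 7])) (hd ([0] @ [q + 2..<q + 5] @ [Suc (length P)] @ rev [1..<Suc q]))"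
        using p a R0[of "q + 5" u u'] by (subst last_rev_upt) auto
  qed
  have d: "distinct ?idx" using p by (auto simp: set_upt)
  have l: "k \<le> length ?idx" using p k by simp
  have s: "set ?idx \<subseteq> {0..Suc (length P)}" using p by (auto simp: set_upt)
  have nu: "Suc (length P) \<in> set ?idx \<Longrightarrow> u' \<in> verts G \<and> u' \<notin> set P \<and> u' \<noteq> u" using u' by simp
  show False using longpath[OF u nu d s l _ f sc] by simp
qed

end

lemma nc_inj:
  assumes nc: "\<And>x. x \<in> A \<Longrightarrow> Suc x \<notin> A"
  shows "inj_on (\<lambda>x::nat. x div 2) A"
proof (rule inj_onI)
  fix x y assume xy: "x \<in> A" "y \<in> A" "x div 2 = y div 2"
  show "x = y"
  proof (rule ccontr)
    assume "x \<noteq> y"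
    then have "y = Suc x \<or> x = Suc y" using xy(3) by presburger
    then show False using nc xy by blast
  qed
qed

lemma card_bound:
  assumes sub: "\<forall>x\<in>A. 2 \<le> x \<and> x < p" and nc: "\<And>x. x \<in> A \<Longrightarrow> Suc x \<notin> A"
  shows "card A \<le> (p - 1) div 2"
proof -
  have "card A = card ((\<lambda>x::nat. x div 2) ` A)" using nc_inj[OF nc] by (simp add: card_image)
  also have "\<dots> \<le> card {1..(p - 1) div 2}"
  proof (rule card_mono)
    show "(\<lambda>x::nat. x div 2) ` A \<subseteq> {1..(p - 1) div 2}"
    proof
      fix y assume "y \<in> (\<lambda>x::nat. x div 2) ` A"
      then obtain x where x: "x \<in> A" "y = x div 2" by auto
      then have "2 \<le> x" "x \<le> p - 1" using sub by auto
      then have "1 \<le> x div 2" "x div 2 \<le> (p - 1) div 2" by (presburger, simp add: div_le_mono)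
      then show "y \<in> {1..(p - 1) div 2}" using x by simp
    qed
  qed simp
  finally show ?thesis by simp
qed

lemma shape_lemma:
  fixes A :: "nat set" and p t :: nat
  assumes sub: "\<forall>x\<in>A. 2 \<le> x \<and> x < p"
    and nc: "\<And>x. x \<in> A \<Longrightarrow> Suc x \<notin> A"
    and cd: "t - 1 \<le> card A" and pt: "p \<le> 2 * t" and t: "1 \<le> t" and p0: "1 \<le> p"
  shows "2 * t - 1 \<le> p \<and> (\<exists>j. j \<le> t - 1 \<and>
     (\<forall>x. x \<in> A \<longleftrightarrow> (2 \<le> x \<and> x \<le> 2 * t - 1 \<and> (even x \<longrightarrow> x \<le> 2 * j) \<and> (odd x \<longrightarrow> 2 * j + 3 \<le> x))) \<and>
     (p = 2 * t - 1 \<longrightarrow> j = t - 1))"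
proof -
  let ?f = "\<lambda>x::nat. x div 2"
  have inj: "inj_on ?f A" by (rule nc_inj[OF nc])
  have "A \<subseteq> {..<p}" using sub by auto
  then have fin: "finite A" by (rule finite_subset) simp
  have img: "?f ` A \<subseteq> {1..t - 1}"
  proof
    fix y assume "y \<in> ?f ` A"
    then obtain x where x: "x \<in> A" "y = x div 2" by auto
    then have "2 \<le> x" "x < 2 * t" using sub pt by auto
    then have "1 \<le> x div 2" "x div 2 \<le> t - 1" by presburger+
    then show "y \<in> {1..t - 1}" using x by simp
  qed
  have "card (?f ` A) = card A" using inj by (simp add: card_image)
  then have "card {1..t - 1} \<le> card (?f ` A)" using cd by simp
  then have surj: "?f ` A = {1..t - 1}" using img by (intro card_seteq) auto
  have pb: "card A \<le> (p - 1) div 2" by (rule card_bound[OF sub nc])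
  have "2 * ((p - 1) div 2) \<le> p - 1" by presburger
  moreover have "t - 1 \<le> (p - 1) div 2" using pb cd by linarith
  ultimately have "2 * (t - 1) \<le> p - 1" by linarith
  then have p1: "2 * t - 1 \<le> p" using t p0 by linarith
  have pair: "\<And>i. 1 \<le> i \<Longrightarrow> i \<le> t - 1 \<Longrightarrow> 2 * i \<in> A \<or> Suc (2 * i) \<in> A"
  proof -
    fix i assume "1 \<le> i" "i \<le> t - 1"
    then have "i \<in> ?f ` A" using surj by auto
    then obtain x where "x \<in> A" "i = x div 2" by auto
    then have "x = 2 * i \<or> x = Suc (2 * i)" by presburger
    then show "2 * i \<in> A \<or> Suc (2 * i) \<in> A" using \<open>x \<in> A\<close> by auto
  qed
  have down: "\<And>i. 2 * i \<in> A \<Longrightarrow> 2 \<le> i \<Longrightarrow> 2 * (i - 1) \<in> A"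
  proof -
    fix i assume i: "2 * i \<in> A" "2 \<le> i"
    have "2 * i < p" using sub i by auto
    then have "i \<le> t - 1" using pt by linarith
    then have "2 * (i - 1) \<in> A \<or> Suc (2 * (i - 1)) \<in> A" using pair[of "i - 1"] i by auto
    moreover have "Suc (Suc (2 * (i - 1))) = 2 * i" using i by simp
    ultimately show "2 * (i - 1) \<in> A" using nc i by metis
  qed
  define J where "J = {i. 1 \<le> i \<and> i \<le> t - 1 \<and> 2 * i \<in> A}"
  define j where "j = (if J = {} then 0 else Max J)"
  have finJ: "finite J" unfolding J_def by auto
  have Jsub: "J \<subseteq> {1..t - 1}" unfolding J_def by auto
  have jle: "j \<le> t - 1"
  proof (cases "J = {}")
    case False
    then have "Max J \<in> J" using finJ by simp
    then show ?thesis using Jsub False unfolding j_def by auto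
  qed (simp add: j_def)
  have above: "\<And>i. j < i \<Longrightarrow> i \<le> t - 1 \<Longrightarrow> 2 * i \<notin> A"
  proof
    fix i assume i: "j < i" "i \<le> t - 1" "2 * i \<in> A"
    then have "i \<in> J" unfolding J_def by auto
    then have "i \<le> j" unfolding j_def using finJ by auto
    then show False using i by simp
  qed
  have below: "\<And>i. 1 \<le> i \<Longrightarrow> i \<le> j \<Longrightarrow> 2 * i \<in> A"
  proof -
    have jA: "1 \<le> j \<Longrightarrow> 2 * j \<in> A"
    proof -
      assume "1 \<le> j"
      then have "J \<noteq> {}" unfolding j_def by (auto split: if_splits)
      then have "j \<in> J" unfolding j_def using finJ by auto
      then show "2 * j \<in> A" unfolding J_def by auto
    qed
    have "\<And>d. d < j \<Longrightarrow> 2 * (j - d) \<in> A"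
    proof -
      fix d show "d < j \<Longrightarrow> 2 * (j - d) \<in> A"
      proof (induction d)
        case 0 then show ?case using jA by simp
      next
        case (Suc d)
        then have "2 * (j - d) \<in> A" by simp
        from down[OF this] Suc.prems have "2 * (j - d - 1) \<in> A" by simp
        then show ?case by (simp add: diff_diff_add)
      qed
    qed
    then show "\<And>i. 1 \<le> i \<Longrightarrow> i \<le> j \<Longrightarrow> 2 * i \<in> A"
    proof -
      fix i assume i: "1 \<le> i" "i \<le> j"
      then have "j - i < j" by simp
      then have "2 * (j - (j - i)) \<in> A" by fact
      then show "2 * i \<in> A" using i by simp
    qed
  qed
  have char: "\<forall>x. x \<in> A \<longleftrightarrow> (2 \<le> x \<and> x \<le> 2 * t - 1 \<and> (even x \<longrightarrow> x \<le> 2 * j) \<and> (odd x \<longrightarrow> 2 * j + 3 \<le> x))"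
  proof (intro allI iffI)
    fix x assume xA: "x \<in> A"
    then have x: "2 \<le> x" "x \<le> 2 * t - 1" using sub pt by auto
    show "2 \<le> x \<and> x \<le> 2 * t - 1 \<and> (even x \<longrightarrow> x \<le> 2 * j) \<and> (odd x \<longrightarrow> 2 * j + 3 \<le> x)"
    proof (intro conjI impI x)
      assume "even x"
      then obtain i where i: "x = 2 * i" by auto
      then have "i \<le> t - 1" using x by simp
      show "x \<le> 2 * j"
      proof (rule ccontr)
        assume "\<not> x \<le> 2 * j"
        then have "j < i" using i by simp
        then show False using above[of i] \<open>i \<le> t - 1\<close> xA i by simp
      qed
    next
      assume "odd x"
      then obtain i where i: "x = Suc (2 * i)" by (metis oddE Suc_eq_plus1)
      then have "1 \<le> i" using x by simp
      show "2 * j + 3 \<le> x"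
      proof (rule ccontr)
        assume "\<not> 2 * j + 3 \<le> x"
        then have "i \<le> j" using i by simp
        then have "2 * i \<in> A" using below \<open>1 \<le> i\<close> by simp
        then show False using nc xA i by blast
      qed
    qed
  next
    fix x assume x: "2 \<le> x \<and> x \<le> 2 * t - 1 \<and> (even x \<longrightarrow> x \<le> 2 * j) \<and> (odd x \<longrightarrow> 2 * j + 3 \<le> x)"
    show "x \<in> A"
    proof (cases "even x")
      case True
      then obtain i where i: "x = 2 * i" by auto
      then show ?thesis using below[of i] x True by simp
    next
      case False
      then obtain i where i: "x = Suc (2 * i)" by (metis oddE Suc_eq_plus1)
      then have "j < i" "1 \<le> i" "i \<le> t - 1" using x False by auto
      then show ?thesis using above[of i] pair[of i] i by auto
    qed
  qed
  have last: "p = 2 * t - 1 \<longrightarrow> j = t - 1"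
  proof
    assume pe: "p = 2 * t - 1"
    show "j = t - 1"
    proof (rule ccontr)
      assume "j \<noteq> t - 1"
      then have "j < t - 1" using jle by simp
      then have t2: "2 \<le> t" by simp
      have "odd (2 * t - 1)" using t by simp
      moreover have "2 * j + 3 \<le> 2 * t - 1" using \<open>j < t - 1\<close> by simp
      moreover have "2 \<le> 2 * t - 1" using t2 by simp
      ultimately have "2 * t - 1 \<in> A" using char[rule_format, of "2 * t - 1"] by simp
      then show False using sub pe by auto
    qed
  qed
  show ?thesis by (intro conjI exI[of _ j] p1 jle char last)
qed

lemma deg2:
  assumes sg: "simple_graph G" and tc: "two_connected G" and v: "v \<in> verts G"
  shows "2 \<le> degree G v"
proof (rule ccontr)
  assume "\<not> 2 \<le> degree G v"
  then have c1: "card (neighbours G v) \<le> 1" by (simp add: degree_def)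
  have finV: "finite (verts G)" using sg by (simp add: simple_graph_def)
  have c3: "3 \<le> card (verts G)" using tc by (simp add: two_connected_def)
  have nsub: "neighbours G v \<subseteq> verts G" by (auto simp: neighbours_def)
  have nv: "v \<notin> neighbours G v" using sg_irr[OF sg] by (auto simp: neighbours_def)
  obtain w where w: "w \<in> verts G" "w \<noteq> v" "neighbours G v \<subseteq> {w}"
  proof (cases "neighbours G v = {}")
    case True
    have "card (verts G - {v}) \<ge> 2" using c3 v finV by (simp add: card_Diff_singleton)
    then obtain w where "w \<in> verts G - {v}" by (metis all_not_in_conv card.empty not_numeral_le_zero)
    then show ?thesis using that True by auto
  next
    case False
    have "finite (neighbours G v)" using finV nsub finite_subset by blast
    then have "card (neighbours G v) = 1" using False c1 by (simp add: Suc_le_eq card_gt_0_iff le_antisym)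
    then obtain w where "neighbours G v = {w}" by (auto simp: card_Suc_eq)
    then show ?thesis using that nsub nv by auto
  qed
  have "card (verts G - {v, w}) \<ge> 1" using c3 v w finV by (simp add: card_Diff_subset)
  then obtain x where x: "x \<in> verts G" "x \<noteq> v" "x \<noteq> w" by (metis Diff_iff all_not_in_conv card.empty insertCI not_one_le_zero)
  have "connected (delete_vertex G w)" using tc w by (simp add: two_connected_def)
  then have "(\<lambda>a b. adj (delete_vertex G w) a b \<and> a \<in> verts (delete_vertex G w) \<and> b \<in> verts (delete_vertex G w))\<^sup>*\<^sup>* v x"
    using v x w unfolding connected_def by (auto simp: delete_vertex_def verts_def)
  then show False
  proof (cases rule: converse_rtranclpE)
    case base then show ?thesis using x by simp
  next
    case (step y)
    then have "adj G v y" "y \<noteq> w" "y \<in> verts G" by (auto simp: delete_vertex_def verts_def adj_def)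
    then have "y \<in> neighbours G v" by (simp add: neighbours_def)
    then show ?thesis using w \<open>y \<noteq> w\<close> by auto
  qed
qed

definition Hof :: "'a graph \<Rightarrow> (nat \<Rightarrow> 'a) \<Rightarrow> nat \<Rightarrow> nat graph" where
  "Hof G h d = ({0..<d}, \<lambda>i j. i < d \<and> j < d \<and> adj G (h i) (h j))"

lemma H_props:
  assumes sg: "simple_graph G" and h: "bij_betw h {0..<d} S" and S: "S \<subseteq> verts G"
    and u0: "u0 \<in> verts G" "u0 \<notin> S" "\<forall>s\<in>S. adj G u0 s"
    and fm: "free_of (complete_graph m) G" and m: "1 \<le> m"
  shows "simple_graph (Hof G h d) \<and> card (verts (Hof G h d)) = d \<and> free_of (complete_graph (m - 1)) (Hof G h d)"
proof (intro conjI)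
  show "simple_graph (Hof G h d)"
    using sg_sym[OF sg] sg_irr[OF sg] by (auto simp: simple_graph_def Hof_def verts_def adj_def)
  show "card (verts (Hof G h d)) = d" by (simp add: Hof_def verts_def)
  show "free_of (complete_graph (m - 1)) (Hof G h d)"
    unfolding free_of_def
  proof
    assume "subgraph_of (complete_graph (m - 1)) (Hof G h d)"
    then obtain \<phi> where phi: "inj_on \<phi> {0..<m - 1}" "\<phi> ` {0..<m - 1} \<subseteq> {0..<d}"
      "\<And>i j. i < m - 1 \<Longrightarrow> j < m - 1 \<Longrightarrow> i \<noteq> j \<Longrightarrow> adj G (h (\<phi> i)) (h (\<phi> j))"
      unfolding subgraph_of_def by (auto simp: complete_graph_def Hof_def verts_def adj_def)
    define \<psi> where "\<psi> i = (if i < m - 1 then h (\<phi> i) else u0)" for i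
    have pin: "\<And>i. i < m - 1 \<Longrightarrow> \<phi> i \<in> {0..<d}" using phi(2) by (meson atLeastLessThan_iff image_subset_iff zero_le)
    have hin: "\<And>i. i < m - 1 \<Longrightarrow> h (\<phi> i) \<in> S"
    proof -
      fix i assume "i < m - 1"
      then have "\<phi> i \<in> {0..<d}" using phi(2) by (meson atLeastLessThan_iff image_subset_iff zero_le)
      then show "h (\<phi> i) \<in> S" using h by (auto simp: bij_betw_def)
    qed
    have "subgraph_of (complete_graph m) G"
      unfolding subgraph_of_def
    proof (intro exI[of _ \<psi>] conjI ballI impI)
      show "inj_on \<psi> (verts (complete_graph m))"
      proof (rule inj_onI)
        fix i j assume ij: "i \<in> verts (complete_graph m)" "j \<in> verts (complete_graph m)" "\<psi> i = \<psi> j"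
        then have ij': "i < m" "j < m" by (auto simp: complete_graph_def verts_def)
        show "i = j"
        proof (cases "i < m - 1"; cases "j < m - 1")
          assume a: "i < m - 1" "j < m - 1"
          then have "h (\<phi> i) = h (\<phi> j)" using ij by (simp add: \<psi>_def)
          then have "\<phi> i = \<phi> j" using h pin[of i] pin[of j] a unfolding bij_betw_def inj_on_def by blast
          then show ?thesis using phi(1) a unfolding inj_on_def by auto
        next
          assume a: "i < m - 1" "\<not> j < m - 1"
          then show ?thesis using ij hin[of i] u0 by (simp add: \<psi>_def)
        next
          assume a: "\<not> i < m - 1" "j < m - 1"
          then show ?thesis using ij hin[of j] u0 by (simp add: \<psi>_def)
        next
          assume a: "\<not> i < m - 1" "\<not> j < m - 1"
          then show ?thesis using ij' by simp
        qed
      qed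
      show "\<psi> ` verts (complete_graph m) \<subseteq> verts G"
        using hin S u0 by (auto simp: \<psi>_def complete_graph_def verts_def)
      fix i j assume ij: "i \<in> verts (complete_graph m)" "j \<in> verts (complete_graph m)" "adj (complete_graph m) i j"
      then have ij': "i < m" "j < m" "i \<noteq> j" by (auto simp: complete_graph_def verts_def adj_def)
      show "adj G (\<psi> i) (\<psi> j)"
      proof (cases "i < m - 1"; cases "j < m - 1")
        assume a: "i < m - 1" "j < m - 1"
        then show ?thesis using phi(3) ij' by (simp add: \<psi>_def)
      next
        assume a: "i < m - 1" "\<not> j < m - 1"
        then show ?thesis using hin[of i] u0 sg_sym[OF sg] by (simp add: \<psi>_def)
      next
        assume a: "\<not> i < m - 1" "j < m - 1"
        then show ?thesis using hin[of j] u0 by (simp add: \<psi>_def)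
      next
        assume a: "\<not> i < m - 1" "\<not> j < m - 1"
        then show ?thesis using ij' by simp
      qed
    qed
    then show False using fm by (simp add: free_of_def)
  qed
qed

lemma inv_facts:
  assumes "bij_betw h A S" "v \<in> S"
  shows "inv_into A h v \<in> A" "h (inv_into A h v) = v"
  using assms by (auto simp: bij_betw_def inv_into_into f_inv_into_f)

lemma inv_inj:
  assumes "bij_betw h A S" "a \<in> S" "b \<in> S" "inv_into A h a = inv_into A h b"
  shows "a = b"
  using assms inv_facts by metis

lemma embed_even:
  assumes sg: "simple_graph G" and S: "S \<subseteq> verts G" and h: "bij_betw h {0..<d} S"
    and n: "card (verts G) = n"
    and indep: "\<And>a b. a \<in> verts G - S \<Longrightarrow> b \<in> verts G - S \<Longrightarrow> \<not> adj G a b"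
  shows "subgraph_of G (graph_join (Hof G h d) (edgeless_graph (n - d)))"
proof -
  have finV: "finite (verts G)" using sg by (simp add: simple_graph_def)
  have cS: "card S = d" using h by (simp add: bij_betw_same_card[symmetric])
  have cW: "card (verts G - S) = n - d" using S finV n cS by (simp add: card_Diff_subset finite_subset)
  obtain w where w: "bij_betw w {0..<n - d} (verts G - S)"
    using ex_bij_betw_nat_finite[of "verts G - S"] finV cW by auto
  define f where "f v = (if v \<in> S then Inl (inv_into {0..<d} h v) else Inr (inv_into {0..<n - d} w v))" for v
  show ?thesis
    unfolding subgraph_of_def
  proof (intro exI[of _ f] conjI ballI impI)
    show "inj_on f (verts G)"
    proof (rule inj_onI)
      fix a b assume ab: "a \<in> verts G" "b \<in> verts G" "f a = f b"
      show "a = b"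
      proof (cases "a \<in> S"; cases "b \<in> S")
        assume "a \<in> S" "b \<in> S" then show ?thesis using ab inv_inj[OF h] by (simp add: f_def)
      next
        assume "a \<notin> S" "b \<notin> S" then show ?thesis using ab inv_inj[OF w] by (simp add: f_def)
      qed (use ab in \<open>auto simp: f_def\<close>)
    qed
    show "f ` verts G \<subseteq> verts (graph_join (Hof G h d) (edgeless_graph (n - d)))"
    proof
      fix z assume "z \<in> f ` verts G"
      then obtain v where v: "v \<in> verts G" "z = f v" by auto
      show "z \<in> verts (graph_join (Hof G h d) (edgeless_graph (n - d)))"
      proof (cases "v \<in> S")
        case True then show ?thesis using v inv_facts(1)[OF h True]
          by (auto simp: f_def graph_join_def Hof_def verts_def edgeless_graph_def)
      next
        case False then have "v \<in> verts G - S" using v by simp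
        then show ?thesis using v inv_facts(1)[OF w] False
          by (auto simp: f_def graph_join_def Hof_def verts_def edgeless_graph_def)
      qed
    qed
    fix a b assume ab: "a \<in> verts G" "b \<in> verts G" "adj G a b"
    show "adj (graph_join (Hof G h d) (edgeless_graph (n - d))) (f a) (f b)"
    proof (cases "a \<in> S"; cases "b \<in> S")
      assume s: "a \<in> S" "b \<in> S"
      then show ?thesis using ab inv_facts[OF h s(1)] inv_facts[OF h s(2)]
        by (simp add: f_def graph_join_def Hof_def verts_def adj_def)
    next
      assume s: "a \<in> S" "b \<notin> S"
      then show ?thesis using ab inv_facts[OF h s(1)] inv_facts(1)[OF w, of b]
        by (simp add: f_def graph_join_def Hof_def verts_def adj_def edgeless_graph_def)
    next
      assume s: "a \<notin> S" "b \<in> S"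
      then show ?thesis using ab inv_facts[OF h s(2)] inv_facts(1)[OF w, of a]
        by (simp add: f_def graph_join_def Hof_def verts_def adj_def edgeless_graph_def)
    next
      assume s: "a \<notin> S" "b \<notin> S"
      then show ?thesis using ab indep by auto
    qed
  qed
qed

lemma embed_odd:
  assumes sg: "simple_graph G" and S: "S \<subseteq> verts G" and h: "bij_betw h {0..<d} S"
    and n: "card (verts G) = n"
    and xy: "x \<in> verts G - S" "y \<in> verts G - S" "x \<noteq> y"
    and one: "\<And>a b. a \<in> verts G - S \<Longrightarrow> b \<in> verts G - S \<Longrightarrow> adj G a b \<Longrightarrow> (a = x \<and> b = y) \<or> (a = y \<and> b = x)"
  shows "subgraph_of G (graph_join (Hof G h d) (disj_union (edgeless_graph (n - d - 2)) (complete_graph 2)))"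
proof -
  have finV: "finite (verts G)" using sg by (simp add: simple_graph_def)
  have cS: "card S = d" using h by (simp add: bij_betw_same_card[symmetric])
  let ?W = "verts G - S - {x, y}"
  have cW: "card ?W = n - d - 2" using S finV n cS xy
    by (simp add: card_Diff_subset finite_subset card_Diff_subset_Int)
  obtain w where w: "bij_betw w {0..<n - d - 2} ?W"
    using ex_bij_betw_nat_finite[of ?W] finV cW by auto
  define f where "f v = (if v \<in> S then Inl (inv_into {0..<d} h v) else if v = x then Inr (Inr (0::nat))
     else if v = y then Inr (Inr (1::nat)) else Inr (Inl (inv_into {0..<n - d - 2} w v)))" for v
  let ?T = "graph_join (Hof G h d) (disj_union (edgeless_graph (n - d - 2)) (complete_graph 2))"
  show ?thesis
    unfolding subgraph_of_def
  proof (intro exI[of _ f] conjI ballI impI)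
    have cls: "\<And>v. v \<in> verts G \<Longrightarrow> (v \<in> S \<and> f v = Inl (inv_into {0..<d} h v)) \<or> (v = x \<and> f v = Inr (Inr 0))
       \<or> (v = y \<and> f v = Inr (Inr 1)) \<or> (v \<in> ?W \<and> f v = Inr (Inl (inv_into {0..<n - d - 2} w v)))"
      using xy unfolding f_def by auto
    show "inj_on f (verts G)"
    proof (rule inj_onI)
      fix a b assume ab: "a \<in> verts G" "b \<in> verts G" "f a = f b"
      from cls[OF ab(1)] cls[OF ab(2)] ab(3) show "a = b"
        using inv_inj[OF h, of a b] inv_inj[OF w, of a b] by auto
    qed
    show "f ` verts G \<subseteq> verts ?T"
    proof
      fix z assume "z \<in> f ` verts G"
      then obtain v where v: "v \<in> verts G" "z = f v" by auto
      show "z \<in> verts ?T"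
      proof (cases "v \<in> S \<or> v = x \<or> v = y")
        case True then show ?thesis using v inv_facts(1)[OF h, of v] xy
          by (auto simp: f_def graph_join_def disj_union_def Hof_def verts_def complete_graph_def)
      next
        case False then have "v \<in> ?W" using v by simp
        then show ?thesis using v inv_facts(1)[OF w] False
          by (auto simp: f_def graph_join_def disj_union_def Hof_def verts_def edgeless_graph_def)
      qed
    qed
    have fW: "\<And>v. v \<in> verts G \<Longrightarrow> v \<notin> S \<Longrightarrow> \<exists>r. f v = Inr r \<and> r \<in> verts (disj_union (edgeless_graph (n - d - 2)) (complete_graph 2))"
    proof -
      fix v assume v: "v \<in> verts G" "v \<notin> S"
      show "?thesis v"
      proof (cases "v = x \<or> v = y")
        case True then show ?thesis using v by (auto simp: f_def disj_union_def verts_def complete_graph_def)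
      next
        case False then have "v \<in> ?W" using v by simp
        then show ?thesis using v inv_facts(1)[OF w] False
          by (auto simp: f_def disj_union_def verts_def edgeless_graph_def)
      qed
    qed
    fix a b assume ab: "a \<in> verts G" "b \<in> verts G" "adj G a b"
    show "adj ?T (f a) (f b)"
    proof (cases "a \<in> S"; cases "b \<in> S")
      assume s: "a \<in> S" "b \<in> S"
      then show ?thesis using ab inv_facts[OF h s(1)] inv_facts[OF h s(2)]
        by (simp add: f_def graph_join_def Hof_def verts_def adj_def)
    next
      assume s: "a \<in> S" "b \<notin> S"
      obtain r where r: "f b = Inr r" "r \<in> verts (disj_union (edgeless_graph (n - d - 2)) (complete_graph 2))"
        using fW ab s by blast
      show ?thesis using ab inv_facts[OF h s(1)] s r
        by (simp add: f_def graph_join_def Hof_def verts_def adj_def)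
    next
      assume s: "a \<notin> S" "b \<in> S"
      obtain r where r: "f a = Inr r" "r \<in> verts (disj_union (edgeless_graph (n - d - 2)) (complete_graph 2))"
        using fW ab s by blast
      show ?thesis using ab inv_facts[OF h s(2)] s r
        by (simp add: f_def graph_join_def Hof_def verts_def adj_def)
    next
      assume s: "a \<notin> S" "b \<notin> S"
      then have "(a = x \<and> b = y) \<or> (a = y \<and> b = x)" using ab one by auto
      then show ?thesis using xy
        by (auto simp: f_def graph_join_def disj_union_def complete_graph_def verts_def adj_def)
    qed
  qed
qed

definition shp :: "nat \<Rightarrow> nat \<Rightarrow> nat \<Rightarrow> bool" where
  "shp t j x \<longleftrightarrow> 2 \<le> x \<and> x \<le> 2 * t - 1 \<and> (even x \<longrightarrow> x \<le> 2 * j) \<and> (odd x \<longrightarrow> 2 * j + 3 \<le> x)"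

lemma arith5:
  fixes a b j :: nat
  assumes "(odd a \<and> a \<le> 2 * j + 1) \<or> (even a \<and> 2 * j + 2 \<le> a)"
    "(odd b \<and> b \<le> 2 * j + 1) \<or> (even b \<and> 2 * j + 2 \<le> b)" "a < b"
  shows "(odd a \<and> odd b \<and> b \<le> 2 * j + 1) \<or> (even a \<and> even b \<and> 2 * j + 2 \<le> a)
    \<or> (odd a \<and> a + 1 < 2 * j + 1 \<and> even b \<and> 2 * j + 2 \<le> b) \<or> (a = 2 * j + 1 \<and> 2 * j + 4 \<le> b)
    \<or> (a = 2 * j + 1 \<and> b = 2 * j + 2)"
  using assms by presburger

context mp
begin

lemma caseA:
  assumes u: "u \<in> verts G" "u \<notin> set P" and p: "length P = 2 * t - 1" and t: "1 \<le> t"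
    and ch: "\<And>x. x \<in> Au u \<longleftrightarrow> shp t (t - 1) x"
    and ab: "1 \<le> a" "a < b" "b \<le> length P" "a \<notin> Au u" "b \<notin> Au u"
    and e: "adj G (P ! (a - 1)) (P ! (b - 1))"
  shows False
proof -
  have "\<not> shp t (t - 1) a" "\<not> shp t (t - 1) b" using ab(4,5) ch by blast+
  then have oa: "odd a" "odd b" using ab(1-3) p t unfolding shp_def by presburger+
  show False
  proof (rule patY[OF u ab(1-3) e])
    show "Suc a \<in> Au u" unfolding ch shp_def using oa ab(1-3) p t by presburger
    show "b = length P \<or> Suc b \<in> Au u" unfolding ch shp_def using oa ab(1-3) p t by presburger
  qed
qed

lemma caseB2:
  assumes u: "u \<in> verts G" "u \<notin> set P" and p: "length P = 2 * t" and t: "1 \<le> t" and j: "j \<le> t - 1"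
    and ch: "\<And>x. x \<in> Au u \<longleftrightarrow> shp t j x"
    and ab: "1 \<le> a" "a < b" "b \<le> length P" "a \<notin> Au u" "b \<notin> Au u"
    and e: "adj G (P ! (a - 1)) (P ! (b - 1))"
  shows "a = 2 * j + 1 \<and> b = 2 * j + 2"
proof -
  have nn: "\<not> shp t j a" "\<not> shp t j b" using ab(4,5) ch by blast+
  have na: "(odd a \<and> a \<le> 2 * j + 1) \<or> (even a \<and> 2 * j + 2 \<le> a)" using nn(1) ab(1-3) p t j unfolding shp_def by presburger
  have nb: "(odd b \<and> b \<le> 2 * j + 1) \<or> (even b \<and> 2 * j + 2 \<le> b)" using nn(2) ab(1-3) p t j unfolding shp_def by presburger
  consider "odd a" "odd b" "b \<le> 2 * j + 1" | "even a" "even b" "2 * j + 2 \<le> a"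
    | "odd a" "a + 1 < 2 * j + 1" "even b" "2 * j + 2 \<le> b" | "a = 2 * j + 1" "2 * j + 4 \<le> b"
    | "a = 2 * j + 1" "b = 2 * j + 2"
    using arith5[OF na nb ab(2)] by blast
  then show ?thesis
  proof cases
    case 1
    show ?thesis
    proof (rule FalseE, rule patX[OF u ab(1-3) e])
      show "b - 1 \<in> Au u" unfolding ch shp_def using 1 ab(1-3) p t by presburger
      show "a = 1 \<or> a - 1 \<in> Au u" unfolding ch shp_def using 1 ab(1-3) p t by presburger
    qed
  next
    case 2
    show ?thesis
    proof (rule FalseE, rule patY[OF u ab(1-3) e])
      show "Suc a \<in> Au u" unfolding ch shp_def using 2 ab(1-3) p t by presburger
      show "b = length P \<or> Suc b \<in> Au u" unfolding ch shp_def using 2 ab(1-3) p t by presburger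
    qed
  next
    case 3
    show ?thesis
    proof (rule FalseE, rule patY[OF u ab(1-3) e])
      show "Suc a \<in> Au u" unfolding ch shp_def using 3 ab(1-3) p t by presburger
      show "b = length P \<or> Suc b \<in> Au u" unfolding ch shp_def using 3 ab(1-3) p t j by presburger
    qed
  next
    case 4
    show ?thesis
    proof (rule FalseE, rule patX[OF u ab(1-3) e])
      show "b - 1 \<in> Au u" unfolding ch shp_def using 4 nb ab(1-3) p t by presburger
      show "a = 1 \<or> a - 1 \<in> Au u" unfolding ch shp_def using 4 ab(1-3) p t by presburger
    qed
  next
    case 5 then show ?thesis by simp
  qed
qed

lemma caseB1:
  assumes u: "u \<in> verts G" "u \<notin> set P" and u': "u' \<in> verts G" "u' \<notin> set P" "u' \<noteq> u"
    and p: "length P = 2 * t" and t: "3 \<le> t" and jj: "j < j'" "j' \<le> t - 1"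
    and ch: "\<And>x. x \<in> Au u \<longleftrightarrow> shp t j x" and ch': "\<And>x. x \<in> Au u' \<longleftrightarrow> shp t j' x"
    and k: "k = 2 * t + 1" and f: "free_of (path_graph k) G"
  shows False
proof -
  consider "j + 2 \<le> j'" | "j' = j + 1" "j + 3 \<le> t" | "j' = j + 1" "j + 2 = t" using jj by linarith
  then show False
  proof cases
    case 1
    show False
    proof (rule patZ[OF u u', of "2 * j + 2" "2 * j'"])
      show "2 * j + 2 < 2 * j'" using 1 by simp
      show "2 * j' < length P" using jj p by simp
      show "2 * j + 2 \<in> Au u'" unfolding ch' shp_def using 1 jj p t by presburger
      show "2 * j' \<in> Au u'" unfolding ch' shp_def using 1 jj p t by presburger
      show "Suc (2 * j + 2) \<in> Au u" unfolding ch shp_def using 1 jj p t by presburger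
      show "Suc (2 * j') \<in> Au u" unfolding ch shp_def using 1 jj p t by presburger
    qed
  next
    case 2
    show False
    proof (rule patB1b[OF u u', of "2 * j + 2" k])
      show "1 \<le> 2 * j + 2" by simp
      show "2 * j + 2 + 4 \<le> length P" using 2 p by simp
      show "2 * j + 2 \<in> Au u'" unfolding ch' shp_def using 2 jj p t by presburger
      show "2 * j + 2 + 3 \<in> Au u'" unfolding ch' shp_def using 2 jj p t by presburger
      show "Suc (2 * j + 2) \<in> Au u" unfolding ch shp_def using 2 jj p t by presburger
      show "length P < 2 * j + 2 + 5 \<or> 2 * j + 2 + 5 \<in> Au u" unfolding ch shp_def using 2 jj p t by presburger
      show "k \<le> Suc (length P)" using k p by simp
    qed (rule f)
  next
    case 3
    show False
    proof (rule patB1c[OF u u', of "2 * t - 6" k])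
      show "length P = 2 * t - 6 + 6" using p t by simp
      show "2 * t - 6 + 5 \<in> Au u" unfolding ch shp_def using 3 jj p t by presburger
      show "2 * t - 6 + 2 \<in> Au u" unfolding ch shp_def using 3 jj p t by presburger
      show "2 * t - 6 + 4 \<in> Au u'" unfolding ch' shp_def using 3 jj p t by presburger
      show "2 * t - 6 = 0 \<or> 2 * t - 6 \<in> Au u'" unfolding ch' shp_def using 3 jj p t by presburger
      show "k \<le> Suc (length P)" using k p by simp
    qed (rule f)
  qed
qed

end

context mp
begin

lemma Au_adj: "i \<in> Au u \<Longrightarrow> adj G u (P ! (i - 1))" by (simp add: Au_def)

lemma pos_inj:
  assumes "1 \<le> i" "i \<le> length P" "1 \<le> i'" "i' \<le> length P" "P ! (i - 1) = P ! (i' - 1)"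
  shows "i = i'"
proof -
  have "i - 1 < length P" "i' - 1 < length P" using assms by arith+
  then have "i - 1 = i' - 1" using pth nth_eq_iff_index_eq[of P "i - 1" "i' - 1"] assms(5) unfolding is_path_def by auto
  then show ?thesis using assms by arith
qed

lemma set_pos: "v \<in> set P \<Longrightarrow> \<exists>i. 1 \<le> i \<and> i \<le> length P \<and> v = P ! (i - 1)"
proof -
  assume "v \<in> set P"
  then obtain i' where "i' < length P" "v = P ! i'" by (auto simp: in_set_conv_nth)
  then show ?thesis by (intro exI[of _ "Suc i'"]) auto
qed

lemma nbr_pos:
  assumes "neighbours G u \<subseteq> set P" "adj G u v"
  shows "\<exists>i\<in>Au u. v = P ! (i - 1)"
proof -
  have "v \<in> neighbours G u" using assms(2) sg_in[OF sg assms(2)] by (simp add: neighbours_def)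
  then have "v \<in> set P" using assms(1) by auto
  then obtain i where "1 \<le> i" "i \<le> length P" "v = P ! (i - 1)" using set_pos by blast
  then show ?thesis using assms(2) by (auto simp: Au_def)
qed

lemma deg_card:
  assumes "neighbours G u \<subseteq> set P"
  shows "degree G u = card (Au u)"
proof -
  have "neighbours G u = (\<lambda>i. P ! (i - 1)) ` Au u"
  proof
    show "neighbours G u \<subseteq> (\<lambda>i. P ! (i - 1)) ` Au u"
      using nbr_pos[OF assms] by (auto simp: neighbours_def)
    show "(\<lambda>i. P ! (i - 1)) ` Au u \<subseteq> neighbours G u"
      using pth by (auto simp: neighbours_def Au_def is_path_def)
  qed
  moreover have "inj_on (\<lambda>i. P ! (i - 1)) (Au u)"
    by (rule inj_onI) (use pos_inj in \<open>auto simp: Au_def\<close>)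
  ultimately show ?thesis by (simp add: degree_def card_image)
qed

lemma u_facts:
  assumes u: "u \<in> verts G" "u \<notin> set P"
  shows "(\<forall>x\<in>Au u. 2 \<le> x \<and> x < length P) \<and> (\<forall>x. x \<in> Au u \<longrightarrow> Suc x \<notin> Au u)"
proof -
  have A: "2 \<le> x \<and> x < length P" if x: "x \<in> Au u" for x
  proof -
    have "x \<noteq> 1" using ins_first[OF u] x by auto
    moreover have "x \<noteq> length P" using ins_last[OF u] x by auto
    ultimately show "2 \<le> x \<and> x < length P" using x by (auto simp: Au_def)
  qed
  have B: "Suc x \<notin> Au u" if x: "x \<in> Au u" for x using ins_mid[OF u x] by auto
  show ?thesis using A B by blast
qed

lemma pair_pos:
  assumes sd: "\<forall>v\<in>verts G - set P. neighbours G v \<subseteq> set P"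
    and same: "\<forall>u\<in>verts G - set P. Au u = Au u0"
    and ab: "a \<in> verts G" "b \<in> verts G" "adj G a b"
    and nS: "a \<notin> (\<lambda>i. P ! (i - 1)) ` Au u0" "b \<notin> (\<lambda>i. P ! (i - 1)) ` Au u0"
  shows "\<exists>i i'. 1 \<le> i \<and> i \<le> length P \<and> 1 \<le> i' \<and> i' \<le> length P \<and> i \<noteq> i' \<and> i \<notin> Au u0 \<and> i' \<notin> Au u0
      \<and> a = P ! (i - 1) \<and> b = P ! (i' - 1)"
proof -
  have aP: "a \<in> set P"
  proof (rule ccontr)
    assume "a \<notin> set P"
    then obtain i where "i \<in> Au a" "b = P ! (i - 1)" using nbr_pos[of a b] sd ab by blast
    then show False using nS(2) same ab \<open>a \<notin> set P\<close> by auto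
  qed
  have bP: "b \<in> set P"
  proof (rule ccontr)
    assume "b \<notin> set P"
    then obtain i where "i \<in> Au b" "a = P ! (i - 1)" using nbr_pos[of b a] sd ab sg_sym[OF sg] by blast
    then show False using nS(1) same ab \<open>b \<notin> set P\<close> by auto
  qed
  obtain i where i: "1 \<le> i" "i \<le> length P" "a = P ! (i - 1)" using set_pos[OF aP] by blast
  obtain i' where i': "1 \<le> i'" "i' \<le> length P" "b = P ! (i' - 1)" using set_pos[OF bP] by blast
  have "i \<noteq> i'" using i i' ab(3) sg_irr[OF sg] by auto
  moreover have "i \<notin> Au u0" "i' \<notin> Au u0" using nS i i' by auto
  ultimately show ?thesis using i i' by blast
qed

end

theorem lemma3p2:
  fixes G :: "'a graph" and k m n :: nat and P :: "'a list"
  assumes "simple_graph G"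
    and "two_connected G"
    and "free_of (path_graph k) G"
    and "free_of (complete_graph m) G"
    and "card (verts G) = n"
    and "n \<ge> k"
    and "strong_dominating_path G P"
    and "\<forall>u \<in> verts G - set P. degree G u \<ge> delta k"
  shows "\<exists>H :: nat graph. simple_graph H \<and> card (verts H) = delta k \<and>
           free_of (complete_graph (m - 1)) H \<and>
           (if even k
            then subgraph_of G (graph_join H (edgeless_graph (n - delta k)))
            else subgraph_of G (graph_join H
                   (disj_union (edgeless_graph (n - delta k - 2)) (complete_graph 2))))"
proof -
  note sg = assms(1) and tc = assms(2) and fk = assms(3) and fm = assms(4) and nV = assms(5)
  have finV: "finite (verts G)" using sg by (simp add: simple_graph_def)
  have m1: "1 \<le> m"
  proof (rule ccontr)
    assume "\<not> 1 \<le> m"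
    then have "m = 0" by simp
    then show False using fm complete0[of G] by (simp add: free_of_def)
  qed
  define good where "good Q \<longleftrightarrow> strong_dominating_path G Q \<and> (\<forall>u\<in>verts G - set Q. delta k \<le> degree G u)" for Q
  have gP: "good P" using assms(7,8) by (simp add: good_def)
  have bnd: "\<forall>Q. good Q \<longrightarrow> length Q < Suc (card (verts G))"
  proof (intro allI impI)
    fix Q assume "good Q"
    then have "distinct Q" "set Q \<subseteq> verts G" by (auto simp: good_def strong_dominating_path_def is_path_def)
    then have "length Q \<le> card (verts G)" using finV by (metis card_mono distinct_card)
    then show "length Q < Suc (card (verts G))" by simp
  qed
  obtain Pm where gPm: "good Pm" and mx: "\<forall>Q. good Q \<longrightarrow> length Q \<le> length Pm"
    using ex_has_greatest_nat[of good P length "Suc (card (verts G))"] gP bnd by blast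
  have pth: "is_path G Pm" and sd: "\<forall>v\<in>verts G - set Pm. neighbours G v \<subseteq> set Pm"
    and dg: "\<forall>u\<in>verts G - set Pm. delta k \<le> degree G u"
    using gPm by (auto simp: good_def strong_dominating_path_def)
  have maxP: "length Q \<le> length Pm" if "is_path G Q" "set Pm \<subseteq> set Q" for Q
  proof -
    have "good Q" unfolding good_def strong_dominating_path_def
      using that sd dg by blast
    then show ?thesis using mx by blast
  qed
  interpret M: mp G Pm using sg pth maxP by unfold_locales
  have pk: "length Pm < k"
  proof (rule ccontr)
    assume "\<not> length Pm < k"
    then have "subgraph_of (path_graph k) G" using path_graph_sub[OF pth _ sg] by simp
    then show False using fk by (simp add: free_of_def)
  qed
  have p1: "1 \<le> length Pm" using pth by (simp add: is_path_def Suc_le_eq)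
  have "card (set Pm) < card (verts G)" using pk assms(6) nV pth distinct_card[of Pm] by (simp add: is_path_def)
  then have "\<not> verts G \<subseteq> set Pm" by (meson card_mono finite_set not_le)
  then obtain u0 where u0: "u0 \<in> verts G" "u0 \<notin> set Pm" by blast
  define t where "t = k div 2"
  have dk: "delta k = t - 1" by (simp add: delta_def t_def)
  have cardA: "t - 1 \<le> card (M.Au u)" if "u \<in> verts G" "u \<notin> set Pm" for u
  proof -
    have "delta k \<le> degree G u" using dg that by blast
    moreover have "degree G u = card (M.Au u)" using M.deg_card[of u] sd that by blast
    ultimately show ?thesis using dk by simp
  qed
  have uf: "(\<forall>x\<in>M.Au u. 2 \<le> x \<and> x < length Pm) \<and> (\<forall>x. x \<in> M.Au u \<longrightarrow> Suc x \<notin> M.Au u)"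
    if "u \<in> verts G" "u \<notin> set Pm" for u
    using M.u_facts[OF that] .
  define S where "S = (\<lambda>i. Pm ! (i - 1)) ` M.Au u0"
  have SP: "S \<subseteq> set Pm" unfolding S_def M.Au_def by auto
  have SV: "S \<subseteq> verts G" using SP pth by (auto simp: is_path_def)
  have u0S: "u0 \<notin> S" using SP u0 by auto
  have u0adj: "\<forall>s\<in>S. adj G u0 s" unfolding S_def using M.Au_adj by auto
  have cS: "card S = card (M.Au u0)" unfolding S_def
    by (rule card_image, rule inj_onI) (use M.pos_inj in \<open>auto simp: M.Au_def\<close>)
  have cbound: "card (M.Au u0) \<le> (length Pm - 1) div 2"
    using card_bound[of "M.Au u0" "length Pm"] uf[OF u0] by blast
  have finS: "finite S" using SV finV finite_subset by blast
  have resultH: "\<exists>H :: nat graph. simple_graph H \<and> card (verts H) = delta k \<and>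
           free_of (complete_graph (m - 1)) H \<and> subgraph_of G (graph_join H T)"
    if cSd: "card S = delta k" and emb: "\<And>h. bij_betw h {0..<delta k} S \<Longrightarrow> subgraph_of G (graph_join (Hof G h (delta k)) T)"
    for T :: "'b graph"
  proof -
    obtain h where h: "bij_betw h {0..<delta k} S" using ex_bij_betw_nat_finite[OF finS] cSd by auto
    show ?thesis using H_props[OF sg h SV u0(1) u0S u0adj fm m1] emb[OF h] by blast
  qed
  \<comment> \<open>the p = 2t - 1 situation: all outside vertices see exactly the even positions\<close>
  have evenpos: "cS' \<and> indep"
    if pe: "length Pm = 2 * t - 1" and t1: "1 \<le> t" and shapes: "\<And>u. u \<in> verts G \<Longrightarrow> u \<notin> set Pm \<Longrightarrow> (\<forall>x. x \<in> M.Au u \<longleftrightarrow> shp t (t - 1) x)"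
      and "cS' \<longleftrightarrow> card S = t - 1"
      and "indep \<longleftrightarrow> (\<forall>a b. a \<in> verts G - S \<longrightarrow> b \<in> verts G - S \<longrightarrow> \<not> adj G a b)"
    for cS' indep
  proof -
    have same: "\<forall>u\<in>verts G - set Pm. M.Au u = M.Au u0" using shapes u0 by blast
    have "card S = t - 1" using cS cbound cardA[OF u0] pe t1 by simp
    moreover have "\<forall>a b. a \<in> verts G - S \<longrightarrow> b \<in> verts G - S \<longrightarrow> \<not> adj G a b"
    proof (intro allI impI notI)
      fix a b assume ab: "a \<in> verts G - S" "b \<in> verts G - S" "adj G a b"
      obtain i i' where ii: "1 \<le> i" "i \<le> length Pm" "1 \<le> i'" "i' \<le> length Pm" "i \<noteq> i'"
        "i \<notin> M.Au u0" "i' \<notin> M.Au u0" "a = Pm ! (i - 1)" "b = Pm ! (i' - 1)"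
        using M.pair_pos[OF sd same, of a b] ab unfolding S_def by blast
      have ch: "\<And>x. x \<in> M.Au u0 \<longleftrightarrow> shp t (t - 1) x" using shapes[OF u0] by blast
      show False
      proof (cases "i < i'")
        case True
        show False by (rule M.caseA[OF u0 pe t1 ch, of i i']) (use ii True ab in auto)
      next
        case False
        then have "i' < i" using ii by simp
        show False by (rule M.caseA[OF u0 pe t1 ch, of i' i]) (use ii \<open>i' < i\<close> ab sg_sym[OF sg] in auto)
      qed
    qed
    ultimately show ?thesis using that by blast
  qed
  show ?thesis
  proof (cases "even k")
    case True
    then obtain t' where kt: "k = 2 * t'" by blast
    then have tt: "t = t'" by (simp add: t_def)
    have t1: "1 \<le> t" using pk p1 kt tt by simp
    have sh: "2 * t - 1 \<le> length Pm \<and> (\<exists>j. j \<le> t - 1 \<and> (\<forall>x. x \<in> M.Au u \<longleftrightarrow> shp t j x) \<and> (length Pm = 2 * t - 1 \<longrightarrow> j = t - 1))"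
      if "u \<in> verts G" "u \<notin> set Pm" for u
      using shape_lemma[of "M.Au u" "length Pm" t] uf[OF that] cardA[OF that] pk kt tt t1 p1
      unfolding shp_def by auto
    have "2 * t - 1 \<le> length Pm" using sh[OF u0] by blast
    then have pe: "length Pm = 2 * t - 1" using pk kt tt by linarith
    have shapes: "\<And>u. u \<in> verts G \<Longrightarrow> u \<notin> set Pm \<Longrightarrow> (\<forall>x. x \<in> M.Au u \<longleftrightarrow> shp t (t - 1) x)"
      using sh pe by metis
    have ep: "card S = t - 1 \<and> (\<forall>a b. a \<in> verts G - S \<longrightarrow> b \<in> verts G - S \<longrightarrow> \<not> adj G a b)"
      by (rule evenpos[OF pe t1 shapes]) auto
    have "\<exists>H :: nat graph. simple_graph H \<and> card (verts H) = delta k \<and>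
           free_of (complete_graph (m - 1)) H \<and> subgraph_of G (graph_join H (edgeless_graph (n - delta k)))"
    proof (rule resultH)
      show "card S = delta k" using ep dk by simp
      fix h assume h: "bij_betw h {0..<delta k} S"
      show "subgraph_of G (graph_join (Hof G h (delta k)) (edgeless_graph (n - delta k)))"
        by (rule embed_even[OF sg SV h nV]) (use ep in blast)
    qed
    then show ?thesis using True by simp
  next
    case False
    then obtain t' where kt: "k = 2 * t' + 1" by (metis oddE)
    then have tt: "t = t'" by (simp add: t_def)
    have "2 \<le> degree G u0" using deg2[OF sg tc u0(1)] .
    then have d2: "2 \<le> card (M.Au u0)" using M.deg_card[of u0] sd u0 by auto
    have t3: "3 \<le> t"
    proof (rule ccontr)
      assume "\<not> 3 \<le> t"
      then have "(length Pm - 1) div 2 \<le> 1" using pk kt tt by simp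
      then show False using d2 cbound by simp
    qed
    have t1: "1 \<le> t" using t3 by simp
    have sh: "2 * t - 1 \<le> length Pm \<and> (\<exists>j. j \<le> t - 1 \<and> (\<forall>x. x \<in> M.Au u \<longleftrightarrow> shp t j x) \<and> (length Pm = 2 * t - 1 \<longrightarrow> j = t - 1))"
      if "u \<in> verts G" "u \<notin> set Pm" for u
      using shape_lemma[of "M.Au u" "length Pm" t] uf[OF that] cardA[OF that] pk kt tt t1 p1
      unfolding shp_def by auto
    have nbig: "2 * t + 1 \<le> n" using assms(6) kt tt by simp
    have res: "subgraph_of G (graph_join (Hof G h (delta k)) (disj_union (edgeless_graph (n - delta k - 2)) (complete_graph 2)))"
      if h: "bij_betw h {0..<delta k} S" and cS1: "card S = t - 1" and xy: "x \<in> verts G - S" "y \<in> verts G - S" "x \<noteq> y"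
        and one: "\<And>a b. a \<in> verts G - S \<Longrightarrow> b \<in> verts G - S \<Longrightarrow> adj G a b \<Longrightarrow> (a = x \<and> b = y) \<or> (a = y \<and> b = x)"
      for h x y
      by (rule embed_odd[OF sg SV h nV xy one])
    consider "length Pm = 2 * t - 1" | "length Pm = 2 * t" using sh[OF u0] pk kt tt by linarith
    then have "\<exists>H :: nat graph. simple_graph H \<and> card (verts H) = delta k \<and>
           free_of (complete_graph (m - 1)) H \<and> subgraph_of G (graph_join H (disj_union (edgeless_graph (n - delta k - 2)) (complete_graph 2)))"
    proof cases
      case 1
      have shapes: "\<And>u. u \<in> verts G \<Longrightarrow> u \<notin> set Pm \<Longrightarrow> (\<forall>x. x \<in> M.Au u \<longleftrightarrow> shp t (t - 1) x)"
        using sh 1 by metis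
      have ep: "card S = t - 1 \<and> (\<forall>a b. a \<in> verts G - S \<longrightarrow> b \<in> verts G - S \<longrightarrow> \<not> adj G a b)"
        by (rule evenpos[OF 1 t1 shapes]) auto
      have "card (verts G - S) = n - (t - 1)" using ep SV finV nV by (simp add: card_Diff_subset finite_subset)
      then have "2 \<le> card (verts G - S)" using nbig t1 by arith
      then obtain x y where xy: "x \<in> verts G - S" "y \<in> verts G - S" "x \<noteq> y"
        by (metis card_le_Suc0_iff_eq not_less_eq_eq numeral_2_eq_2 finite_Diff finV)
      show ?thesis
      proof (rule resultH)
        show "card S = delta k" using ep dk by simp
        fix h assume h: "bij_betw h {0..<delta k} S"
        show "subgraph_of G (graph_join (Hof G h (delta k)) (disj_union (edgeless_graph (n - delta k - 2)) (complete_graph 2)))"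
          by (rule res[OF h _ xy]) (use ep in auto)
      qed
    next
      case 2
      obtain j0 where j0: "j0 \<le> t - 1" "\<forall>x. x \<in> M.Au u0 \<longleftrightarrow> shp t j0 x" using sh[OF u0] by blast
      have same: "\<forall>u\<in>verts G - set Pm. M.Au u = M.Au u0"
      proof
        fix u assume u: "u \<in> verts G - set Pm"
        show "M.Au u = M.Au u0"
        proof (cases "u = u0")
          case True then show ?thesis by simp
        next
          case False
          obtain j where j: "j \<le> t - 1" "\<forall>x. x \<in> M.Au u \<longleftrightarrow> shp t j x" using sh u by blast
          have uV: "u \<in> verts G" and uP: "u \<notin> set Pm" using u by auto
          have chu: "\<And>x. x \<in> M.Au u \<longleftrightarrow> shp t j x" using j by blast
          have chu0: "\<And>x. x \<in> M.Au u0 \<longleftrightarrow> shp t j0 x" using j0 by blast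
          have kk: "k = 2 * t + 1" using kt tt by simp
          have "j = j0"
          proof (rule ccontr)
            assume "j \<noteq> j0"
            then consider "j < j0" | "j0 < j" by linarith
            then show False
            proof cases
              case a: 1
              show False using M.caseB1[OF uV uP u0(1) u0(2) _ 2 t3 a j0(1) chu chu0 kk fk] False by blast
            next
              case a: 2
              show False using M.caseB1[OF u0(1) u0(2) uV uP _ 2 t3 a j(1) chu0 chu kk fk] False by blast
            qed
          qed
          then show "M.Au u = M.Au u0" using j j0 by auto
        qed
      qed
      have cS1: "card S = t - 1" using cS cbound cardA[OF u0] 2 t1 by simp
      have ch: "\<And>x. x \<in> M.Au u0 \<longleftrightarrow> shp t j0 x" using j0 by blast
      define x where "x = Pm ! (2 * j0)"
      define y where "y = Pm ! (2 * j0 + 1)"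
      have nA: "2 * j0 + 1 \<notin> M.Au u0" "2 * j0 + 2 \<notin> M.Au u0" unfolding ch shp_def by presburger+
      have pos_le: "2 * j0 + 2 \<le> length Pm" using j0 2 t1 by simp
      have xS: "x \<notin> S"
      proof
        assume "x \<in> S"
        then obtain i where i: "i \<in> M.Au u0" "x = Pm ! (i - 1)" unfolding S_def by auto
        have i1: "1 \<le> i" "i \<le> length Pm" using i(1) unfolding M.Au_def by auto
        have "Pm ! (i - 1) = Pm ! (2 * j0 + 1 - 1)" using i(2) unfolding x_def by simp
        then have "i = 2 * j0 + 1" using M.pos_inj[OF i1, of "2 * j0 + 1"] pos_le by simp
        then show False using i nA by simp
      qed
      have yS: "y \<notin> S"
      proof
        assume "y \<in> S"
        then obtain i where i: "i \<in> M.Au u0" "y = Pm ! (i - 1)" unfolding S_def by auto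
        have i1: "1 \<le> i" "i \<le> length Pm" using i(1) unfolding M.Au_def by auto
        have "Pm ! (i - 1) = Pm ! (2 * j0 + 2 - 1)" using i(2) unfolding y_def by simp
        then have "i = 2 * j0 + 2" using M.pos_inj[OF i1, of "2 * j0 + 2"] pos_le by simp
        then show False using i nA by simp
      qed
      have xyV: "x \<in> verts G" "y \<in> verts G" using pos_le pth unfolding x_def y_def is_path_def by auto
      have xy: "x \<noteq> y"
      proof
        assume "x = y"
        then have "Pm ! (2 * j0 + 1 - 1) = Pm ! (2 * j0 + 2 - 1)" unfolding x_def y_def by simp
        then have "2 * j0 + 1 = 2 * j0 + 2" using M.pos_inj[of "2 * j0 + 1" "2 * j0 + 2"] pos_le by simp
        then show False by simp
      qed
      have one: "(a = x \<and> b = y) \<or> (a = y \<and> b = x)"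
        if ab: "a \<in> verts G - S" "b \<in> verts G - S" "adj G a b" for a b
      proof -
        obtain i i' where ii: "1 \<le> i" "i \<le> length Pm" "1 \<le> i'" "i' \<le> length Pm" "i \<noteq> i'"
          "i \<notin> M.Au u0" "i' \<notin> M.Au u0" "a = Pm ! (i - 1)" "b = Pm ! (i' - 1)"
          using M.pair_pos[OF sd same, of a b] ab unfolding S_def by blast
        show ?thesis
        proof (cases "i < i'")
          case True
          have "i = 2 * j0 + 1 \<and> i' = 2 * j0 + 2"
            by (rule M.caseB2[OF u0 2 t1 j0(1) ch]) (use ii True ab in auto)
          then show ?thesis using ii unfolding x_def y_def by auto
        next
          case False
          then have "i' < i" using ii by simp
          have "i' = 2 * j0 + 1 \<and> i = 2 * j0 + 2"
            by (rule M.caseB2[OF u0 2 t1 j0(1) ch]) (use ii \<open>i' < i\<close> ab sg_sym[OF sg] in auto)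
          then show ?thesis using ii unfolding x_def y_def by auto
        qed
      qed
      show ?thesis
      proof (rule resultH)
        show "card S = delta k" using cS1 dk by simp
        fix h assume h: "bij_betw h {0..<delta k} S"
        show "subgraph_of G (graph_join (Hof G h (delta k)) (disj_union (edgeless_graph (n - delta k - 2)) (complete_graph 2)))"
          by (rule res[OF h cS1, of x y]) (use xS yS xyV xy one in auto)
      qed
    qed
    then show ?thesis using False by simp
  qed
qed

end
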